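(* Write $\forall^*x\,\phi$ for $\sim\exists x\sim\phi$ and $\phi\to^*\psi$ for $\sim(\phi\wedge\sim\psi)$. Let $\bar x=(x_1,\dots,x_n)$, let $\bar y$ be a tuple of fresh variables, let $\psi(\bar x,\bar y)$ be an $\mathrm{FO}(\perp\!\!\!\perp_c,\sim)$-formula, and set $\phi_\exists:=\exists\bar y(\bar x\perp\!\!\!\perp\bar y\wedge\psi(\bar x,\bar y))$ and $\phi_\forall:=\forall^*\bar y(\bar x\perp\!\!\!\perp\bar y\to^*\psi(\bar x,\bar y))$. Then for every finite structure $\mathcal A$ and every probabilistic team $\mathbb X$ over $\{x_1,\dots,x_n\}$: (i) $\mathcal A\models_{\mathbb X}\phi_\exists$ iff $\mathcal A\models_{\mathbb X(d/\bar y)}\psi$ for some probability distribution $d\colon A^{|\bar y|}\to[0,1]$; (ii) $\mathcal A\models_{\mathbb X}\phi_\forall$ iff $\mathcal A\models_{\mathbb X(d/\bar y)}\psi$ for all probability distributions $d\colon A^{|\bar y|}\to[0,1]$. Here $\mathbb X(d/\bar y)$ is the team $s(\bar a/\bar y)\mapsto\mathbb X(s)\cdot d(\bar a)$ ($s\in X$, $\bar a\in A^{|\bar y|}$).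
   Context: Probabilistic team semantics. Fix a finite relational vocabulary $\tau$ containing $=$; structures $\mathcal A$ are finite $\tau$-structures with universe $A$. An assignment over a finite set $D$ of first-order variables is a map $s\colon D\to A$; $s(a/x)$ maps $x$ to $a$ and agrees with $s$ elsewhere. A probabilistic team over $D$ is a function $\mathbb X\colon X\to[0,1]$ with $\sum_{s\in X}\mathbb X(s)=1$, where $X$ is a finite set of assignments over $D$ (zero weights allowed); $\mathrm{supp}(\mathbb X)=\{s:\mathbb X(s)\neq0\}$. For a tuple $\bar x$ and $\bar a\in A^{|\bar x|}$, $|\mathbb X_{\bar x=\bar a}|=\sum_{s\in X,\,s(\bar x)=\bar a}\mathbb X(s)$. For $F$ mapping each $t\in X$ to a probability distribution $F(t)$ on $A$, $\mathbb X(F/x)(s(a/x))=\sum_{t\in X,\ t(a/x)=s(a/x)}\mathbb X(t)\,F(t)(a)$; for a tuple $\bar y$ one applies this variable by variable; $\mathbb X(A/x)$ is $\mathbb X(F/x)$ with every $F(t)$ uniform on $A$. For $k\in[0,1]$, $\mathbb Y\sqcup_k\mathbb Z$ is $s\mapsto k\mathbb Y(s)+(1-k)\mathbb Z(s)$. Syntax of $\mathrm{FO}(\perp\!\!\!\perp_c,\sim)$: $\phi::=R(\bar x)\mid\neg R(\bar x)\mid \bar y\perp\!\!\!\perp_{\bar x}\bar z\mid\sim\phi\mid\phi\wedge\phi\mid\phi\vee\phi\mid\exists x\phi\mid\forall x\phi$. Semantics: literals hold in $\mathbb X$ iff every $s\in\mathrm{supp}(\mathbb X)$ satisfies them; $\bar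 y\perp\!\!\!\perp_{\bar x}\bar z$ holds iff $|\mathbb X_{\bar x\bar y=s(\bar x\bar y)}|\cdot|\mathbb X_{\bar x\bar z=s(\bar x\bar z)}|=|\mathbb X_{\bar x\bar y\bar z=s(\bar x\bar y\bar z)}|\cdot|\mathbb X_{\bar x=s(\bar x)}|$ for all $s\colon\mathrm{Var}(\bar x\bar y\bar z)\to A$; the marginal independence atom $\bar x\perp\!\!\!\perp\bar y$ is the case of empty conditioning tuple; $\sim\phi$ holds iff $\phi$ does not; $\wedge$ is classical; $\phi\vee\psi$ holds in $\mathbb X$ iff $\phi$ holds in $\mathbb Y$ and $\psi$ in $\mathbb Z$ for some $\mathbb Y,\mathbb Z,k$ with $\mathbb Y\sqcup_k\mathbb Z=\mathbb X$; $\exists x\phi$ holds in $\mathbb X$ iff $\phi$ holds in $\mathbb X(F/x)$ for some $F$; $\forall x\phi$ holds in $\mathbb X$ iff $\phi$ holds in $\mathbb X(A/x)$. *)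

theory Defs
  imports "HOL-Probability.Probability"
begin

(* Formulas of FO(indep_c, ~). Equality literals are explicit constructors
   (the vocabulary contains =). Indep cs ys zs is  ys _||_{cs} zs . *)
datatype ('v, 'r) fml =
    Rel 'r "'v list"
  | NRel 'r "'v list"
  | Eq 'v 'v
  | NEq 'v 'v
  | Indep "'v list" "'v list" "'v list"
  | Tilde "('v, 'r) fml"
  | And "('v, 'r) fml" "('v, 'r) fml"
  | Or "('v, 'r) fml" "('v, 'r) fml"
  | Ex 'v "('v, 'r) fml"
  | All 'v "('v, 'r) fml"

primrec fv :: "('v, 'r) fml \<Rightarrow> 'v set" where
  "fv (Rel r xs) = set xs"
| "fv (NRel r xs) = set xs"
| "fv (Eq x y) = {x, y}"
| "fv (NEq x y) = {x, y}"
| "fv (Indep cs ys zs) = set cs \<union> set ys \<union> set zs"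
| "fv (Tilde \<phi>) = fv \<phi>"
| "fv (And \<phi> \<psi>) = fv \<phi> \<union> fv \<psi>"
| "fv (Or \<phi> \<psi>) = fv \<phi> \<union> fv \<psi>"
| "fv (Ex x \<phi>) = fv \<phi> - {x}"
| "fv (All x \<phi>) = fv \<phi> - {x}"

(* Assignments are partial maps; a probabilistic team over D (in a structure
   with universe A) is a finitely supported distribution on assignments
   with domain D and values in A. Zero-weight assignments play no role. *)
type_synonym ('v, 'a) team = "('v \<rightharpoonup> 'a) pmf"

definition team_on :: "'a set \<Rightarrow> 'v set \<Rightarrow> ('v, 'a) team \<Rightarrow> bool" where
  "team_on A D X \<longleftrightarrow> (\<forall>s\<in>set_pmf X. dom s = D \<and> ran s \<subseteq> A)"

definition wt :: "('v, 'a) team \<Rightarrow> 'v list \<Rightarrow> ('v \<Rightarrow> 'a) \<Rightarrow> real" where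
  "wt X vs s = measure_pmf.prob X {t. \<forall>v\<in>set vs. t v = Some (s v)}"

definition supp_x :: "('v, 'a) team \<Rightarrow> 'v \<Rightarrow> (('v \<rightharpoonup> 'a) \<Rightarrow> 'a pmf) \<Rightarrow> ('v, 'a) team" where
  "supp_x X x F = bind_pmf X (\<lambda>t. map_pmf (\<lambda>a. t(x \<mapsto> a)) (F t))"

primrec sat :: "'a set \<Rightarrow> ('r \<Rightarrow> 'a list \<Rightarrow> bool) \<Rightarrow> 'v set \<Rightarrow> ('v, 'a) team \<Rightarrow> ('v, 'r) fml \<Rightarrow> bool" where
  "sat A I D X (Rel r xs) = (\<forall>s\<in>set_pmf X. I r (map (\<lambda>v. the (s v)) xs))"
| "sat A I D X (NRel r xs) = (\<forall>s\<in>set_pmf X. \<not> I r (map (\<lambda>v. the (s v)) xs))"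
| "sat A I D X (Eq x y) = (\<forall>s\<in>set_pmf X. the (s x) = the (s y))"
| "sat A I D X (NEq x y) = (\<forall>s\<in>set_pmf X. the (s x) \<noteq> the (s y))"
| "sat A I D X (Indep cs ys zs) =
     (\<forall>s. (\<forall>v. s v \<in> A) \<longrightarrow>
        wt X (cs @ ys) s * wt X (cs @ zs) s = wt X (cs @ ys @ zs) s * wt X cs s)"
| "sat A I D X (Tilde \<phi>) = (\<not> sat A I D X \<phi>)"
| "sat A I D X (And \<phi> \<psi>) = (sat A I D X \<phi> \<and> sat A I D X \<psi>)"
| "sat A I D X (Or \<phi> \<psi>) =
     (\<exists>Y Z k. 0 \<le> k \<and> k \<le> 1 \<and> team_on A D Y \<and> team_on A D Z \<and>
        (\<forall>s. pmf X s = k * pmf Y s + (1 - k) * pmf Z s) \<and>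
        sat A I D Y \<phi> \<and> sat A I D Z \<psi>)"
| "sat A I D X (Ex x \<phi>) =
     (\<exists>F. (\<forall>t\<in>set_pmf X. set_pmf (F t) \<subseteq> A) \<and> sat A I (insert x D) (supp_x X x F) \<phi>)"
| "sat A I D X (All x \<phi>) = sat A I (insert x D) (supp_x X x (\<lambda>_. pmf_of_set A)) \<phi>"

definition ForallStar :: "'v \<Rightarrow> ('v, 'r) fml \<Rightarrow> ('v, 'r) fml" where
  "ForallStar x \<phi> = Tilde (Ex x (Tilde \<phi>))"

definition ImpStar :: "('v, 'r) fml \<Rightarrow> ('v, 'r) fml \<Rightarrow> ('v, 'r) fml" where
  "ImpStar \<phi> \<psi> = Tilde (And \<phi> (Tilde \<psi>))"

definition Exs :: "'v list \<Rightarrow> ('v, 'r) fml \<Rightarrow> ('v, 'r) fml" where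
  "Exs ys \<phi> = foldr Ex ys \<phi>"

definition ForallStars :: "'v list \<Rightarrow> ('v, 'r) fml \<Rightarrow> ('v, 'r) fml" where
  "ForallStars ys \<phi> = foldr ForallStar ys \<phi>"

definition phi_ex :: "'v list \<Rightarrow> 'v list \<Rightarrow> ('v, 'r) fml \<Rightarrow> ('v, 'r) fml" where
  "phi_ex xs ys \<psi> = Exs ys (And (Indep [] xs ys) \<psi>)"

definition phi_all :: "'v list \<Rightarrow> 'v list \<Rightarrow> ('v, 'r) fml \<Rightarrow> ('v, 'r) fml" where
  "phi_all xs ys \<psi> = ForallStars ys (ImpStar (Indep [] xs ys) \<psi>)"

definition distr_on :: "'a set \<Rightarrow> nat \<Rightarrow> 'a list pmf \<Rightarrow> bool" where
  "distr_on A k d \<longleftrightarrow> (\<forall>as\<in>set_pmf d. length as = k \<and> set as \<subseteq> A)"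

definition team_subst :: "('v, 'a) team \<Rightarrow> 'v list \<Rightarrow> 'a list pmf \<Rightarrow> ('v, 'a) team" where
  "team_subst X ys d = bind_pmf X (\<lambda>s. map_pmf (\<lambda>as. s(ys [\<mapsto>] as)) d)"

end

theory Submission
  imports Defs
begin

lemma disint:
  assumes "\<forall>l\<in>set_pmf q. l \<noteq> []"
  shows "bind_pmf (map_pmf hd q) (\<lambda>a. map_pmf (\<lambda>l. a # tl l) (cond_pmf q {l. hd l = a})) = q"
proof -
  have "bind_pmf (map_pmf hd q) (\<lambda>a. map_pmf (\<lambda>l. a # tl l) (cond_pmf q {l. hd l = a}))
      = bind_pmf (map_pmf hd q) (\<lambda>a. cond_pmf q {l. hd l = a})"
  proof (rule bind_pmf_cong[OF refl])
    fix a assume a: "a \<in> set_pmf (map_pmf hd q)"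
    then have ne: "set_pmf q \<inter> {l. hd l = a} \<noteq> {}" by auto
    have "map_pmf (\<lambda>l. a # tl l) (cond_pmf q {l. hd l = a}) = map_pmf id (cond_pmf q {l. hd l = a})"
      apply (rule map_pmf_cong[OF refl])
      using assms ne by (auto simp: set_cond_pmf[OF ne])
    then show "map_pmf (\<lambda>l. a # tl l) (cond_pmf q {l. hd l = a}) = cond_pmf q {l. hd l = a}"
      by simp
  qed
  also have "\<dots> = q"
    by (rule bind_cond_pmf_cancel) (auto simp: vimage_def eq_commute)
  finally show ?thesis .
qed

lemma chain:
  assumes "A \<noteq> {}" "distinct ys" "set ys \<inter> D = {}" "team_on A D X"
  shows "sat A I D X (Exs ys \<theta>) \<longleftrightarrow>
    (\<exists>K. (\<forall>s\<in>set_pmf X. distr_on A (length ys) (K s)) \<and>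
       sat A I (D \<union> set ys) (bind_pmf X (\<lambda>s. map_pmf (\<lambda>as. s(ys[\<mapsto>]as)) (K s))) \<theta>)"
  using assms
proof (induction ys arbitrary: D X)
  case Nil
  show ?case
    by (auto simp add: Exs_def bind_return_pmf' distr_on_def intro!: exI[of _ "\<lambda>_. return_pmf []"])
next
  case (Cons y ys)
  have yD: "y \<notin> D" and ysD: "set ys \<inter> insert y D = {}" and dys: "distinct ys"
    using Cons.prems by auto
  have tF: "team_on A (insert y D) (supp_x X y F)" if "\<forall>t\<in>set_pmf X. set_pmf (F t) \<subseteq> A" for F
    using that Cons.prems(4) by (auto simp: team_on_def supp_x_def ran_def) blast
  have DD: "insert y D \<union> set ys = D \<union> set (y # ys)" by auto
  have "sat A I D X (Exs (y # ys) \<theta>) \<longleftrightarrow>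
     (\<exists>F. (\<forall>t\<in>set_pmf X. set_pmf (F t) \<subseteq> A) \<and>
        (\<exists>K. (\<forall>s\<in>set_pmf (supp_x X y F). distr_on A (length ys) (K s)) \<and>
       sat A I (D \<union> set (y # ys)) (bind_pmf (supp_x X y F) (\<lambda>s. map_pmf (\<lambda>as. s(ys[\<mapsto>]as)) (K s))) \<theta>))"
  proof -
    have h: "\<And>F. \<forall>t\<in>set_pmf X. set_pmf (F t) \<subseteq> A \<Longrightarrow> sat A I (insert y D) (supp_x X y F) (Exs ys \<theta>) \<longleftrightarrow>
        (\<exists>K. (\<forall>s\<in>set_pmf (supp_x X y F). distr_on A (length ys) (K s)) \<and>
       sat A I (D \<union> set (y # ys)) (bind_pmf (supp_x X y F) (\<lambda>s. map_pmf (\<lambda>as. s(ys[\<mapsto>]as)) (K s))) \<theta>)"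
      using Cons.IH[OF Cons.prems(1) dys ysD tF] unfolding DD by blast
    have e: "Exs (y # ys) \<theta> = Ex y (Exs ys \<theta>)" by (simp add: Exs_def)
    show ?thesis unfolding e sat.simps using h by blast
  qed
  also have "\<dots> \<longleftrightarrow> (\<exists>K. (\<forall>s\<in>set_pmf X. distr_on A (length (y#ys)) (K s)) \<and>
       sat A I (D \<union> set (y#ys)) (bind_pmf X (\<lambda>s. map_pmf (\<lambda>as. s((y#ys)[\<mapsto>]as)) (K s))) \<theta>)" (is "?l \<longleftrightarrow> ?rhs")
  proof
    assume ?l
    then obtain F K where F: "\<forall>t\<in>set_pmf X. set_pmf (F t) \<subseteq> A"
      and K: "\<forall>s\<in>set_pmf (supp_x X y F). distr_on A (length ys) (K s)"
      and S: "sat A I (D \<union> set (y # ys)) (bind_pmf (supp_x X y F) (\<lambda>s. map_pmf (\<lambda>as. s(ys[\<mapsto>]as)) (K s))) \<theta>"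
      by blast
    define K2 where "K2 s = bind_pmf (F s) (\<lambda>a. map_pmf (Cons a) (K (s(y\<mapsto>a))))" for s
    have "bind_pmf X (\<lambda>s. map_pmf (\<lambda>as. s((y#ys)[\<mapsto>]as)) (K2 s))
        = bind_pmf (supp_x X y F) (\<lambda>s. map_pmf (\<lambda>as. s(ys[\<mapsto>]as)) (K s))"
      by (simp add: K2_def supp_x_def map_bind_pmf bind_assoc_pmf bind_map_pmf map_pmf_comp)
    moreover have "\<forall>s\<in>set_pmf X. distr_on A (length (y#ys)) (K2 s)"
      using F K by (auto simp: K2_def distr_on_def supp_x_def)
    ultimately show ?rhs using S by metis
  next
    assume ?rhs
    then obtain K where K: "\<forall>s\<in>set_pmf X. distr_on A (length (y#ys)) (K s)"
      and S: "sat A I (D \<union> set (y # ys)) (bind_pmf X (\<lambda>s. map_pmf (\<lambda>as. s((y#ys)[\<mapsto>]as)) (K s))) \<theta>"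
      by blast
    define F where "F s = map_pmf hd (K s)" for s
    define K' where "K' t = map_pmf tl (cond_pmf (K (t(y:=None))) {l. hd l = the (t y)})" for t
    have dom: "y \<notin> dom s" if "s \<in> set_pmf X" for s
      using Cons.prems(4) that yD by (auto simp: team_on_def)
    have eq: "K s = bind_pmf (F s) (\<lambda>a. map_pmf (Cons a) (K' (s(y\<mapsto>a))))" if s: "s \<in> set_pmf X" for s
    proof -
      have "s(y\<mapsto>a, y:=None) = s" for a using dom[OF s] by (auto simp: fun_eq_iff)
      then have "bind_pmf (F s) (\<lambda>a. map_pmf (Cons a) (K' (s(y\<mapsto>a))))
        = bind_pmf (map_pmf hd (K s)) (\<lambda>a. map_pmf (\<lambda>l. a # tl l) (cond_pmf (K s) {l. hd l = a}))"
        by (simp add: F_def K'_def map_pmf_comp)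
      also have "\<dots> = K s"
        by (rule disint) (use K s in \<open>fastforce simp: distr_on_def\<close>)
      finally show ?thesis by simp
    qed
    have "bind_pmf X (\<lambda>s. map_pmf (\<lambda>as. s((y#ys)[\<mapsto>]as)) (K s))
        = bind_pmf X (\<lambda>s. map_pmf (\<lambda>as. s((y#ys)[\<mapsto>]as)) (bind_pmf (F s) (\<lambda>a. map_pmf (Cons a) (K' (s(y\<mapsto>a))))))"
      by (rule bind_pmf_cong[OF refl]) (simp add: eq)
    also have "\<dots> = bind_pmf (supp_x X y F) (\<lambda>s. map_pmf (\<lambda>as. s(ys[\<mapsto>]as)) (K' s))"
      by (simp add: supp_x_def map_bind_pmf bind_assoc_pmf bind_map_pmf map_pmf_comp)
    finally have S': "sat A I (D \<union> set (y # ys)) (bind_pmf (supp_x X y F) (\<lambda>s. map_pmf (\<lambda>as. s(ys[\<mapsto>]as)) (K' s))) \<theta>"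
      using S by simp
    have F: "\<forall>t\<in>set_pmf X. set_pmf (F t) \<subseteq> A"
    proof (intro ballI subsetI)
      fix t b assume t: "t \<in> set_pmf X" and b: "b \<in> set_pmf (F t)"
      then obtain l where l: "l \<in> set_pmf (K t)" "b = hd l" by (auto simp: F_def)
      then have "length l = Suc (length ys)" "set l \<subseteq> A" using K t by (auto simp: distr_on_def)
      then show "b \<in> A" using l by (cases l) auto
    qed
    have K'ok: "\<forall>s\<in>set_pmf (supp_x X y F). distr_on A (length ys) (K' s)"
    proof
      fix t assume "t \<in> set_pmf (supp_x X y F)"
      then obtain s a where s: "s \<in> set_pmf X" and a: "a \<in> set_pmf (F s)" and t: "t = s(y\<mapsto>a)"
        by (auto simp: supp_x_def)
      have r: "t(y:=None) = s" using dom[OF s] t by (auto simp: fun_eq_iff domIff)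
      have ne: "set_pmf (K s) \<inter> {l. hd l = a} \<noteq> {}" using a by (auto simp: F_def)
      show "distr_on A (length ys) (K' t)"
        unfolding K'_def r distr_on_def
      proof
        fix l assume "l \<in> set_pmf (map_pmf tl (cond_pmf (K s) {l. hd l = the (t y)}))"
        then obtain m where m: "m \<in> set_pmf (K s)" "l = tl m" using ne by (auto simp: t)
        then have "length m = Suc (length ys)" "set m \<subseteq> A" using K s by (auto simp: distr_on_def)
        then show "length l = length ys \<and> set l \<subseteq> A" using m by (cases m) auto
      qed
    qed
    show ?l using F K'ok S' by blast
  qed
  finally show ?case .
qed


lemma upd_ys:
  "distinct ys \<Longrightarrow> length as = length ys \<Longrightarrow>
   (\<forall>v\<in>set ys. (m(ys[\<mapsto>]as)) v = Some (f v)) \<longleftrightarrow> as = map f ys"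
proof (induction ys arbitrary: as m)
  case Nil then show ?case by simp
next
  case (Cons y ys)
  then obtain a as' where as: "as = a # as'" by (cases as) auto
  define M where "M = m(y\<mapsto>a)"
  have e: "m(y#ys[\<mapsto>]as) = M(ys[\<mapsto>]as')" by (simp add: M_def as)
  have hy: "(M(ys[\<mapsto>]as')) y = Some a" using Cons.prems by (simp add: M_def)
  have IH: "(\<forall>v\<in>set ys. (M(ys[\<mapsto>]as')) v = Some (f v)) \<longleftrightarrow> as' = map f ys"
    using Cons.IH[of as' M] Cons.prems as by simp
  show ?case unfolding e using hy IH as by auto
qed

lemma upd_ran: "(m(ys[\<mapsto>]as)) v = Some b \<Longrightarrow> b \<in> ran m \<union> set as"
proof (induction ys arbitrary: as m)
  case Nil then show ?case by (auto simp: ran_def)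
next
  case (Cons y ys)
  show ?case
  proof (cases as)
    case Nil then show ?thesis using Cons.prems by (auto simp: ran_def)
  next
    case (Cons a as')
    define M where "M = m(y\<mapsto>a)"
    have eq: "m(y#ys[\<mapsto>]as) = M(ys[\<mapsto>]as')" by (simp add: M_def \<open>as = a # as'\<close>)
    have "(M(ys[\<mapsto>]as')) v = Some b" using Cons.prems eq by metis
    then have "b \<in> ran M \<union> set as'" using Cons.IH[of M as'] by blast
    moreover have "ran M \<subseteq> ran m \<union> {a}" by (auto simp: M_def ran_def)
    ultimately show ?thesis using \<open>as = a # as'\<close> by auto
  qed
qed

lemma prob_cong_supp:
  assumes "\<And>x. x \<in> set_pmf M \<Longrightarrow> x \<in> E \<longleftrightarrow> x \<in> F"
  shows "measure_pmf.prob M E = measure_pmf.prob M F"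
proof -
  have "E \<inter> set_pmf M = F \<inter> set_pmf M" using assms by blast
  then show ?thesis by (metis measure_Int_set_pmf)
qed

lemma prob_set_pmf: "measure_pmf.prob M (set_pmf M) = 1"
  using measure_Int_set_pmf[of M UNIV] by simp

lemma team_subst_pair:
  "team_subst X ys d = map_pmf (\<lambda>p. (fst p)(ys[\<mapsto>]snd p)) (pair_pmf X d)"
  by (simp add: team_subst_def pair_pmf_def map_bind_pmf map_pmf_def bind_assoc_pmf bind_return_pmf)

lemma wt_map: "wt (map_pmf g J) vs f = measure_pmf.prob J {p. \<forall>v\<in>set vs. g p v = Some (f v)}"
  by (simp add: wt_def vimage_def)

lemma indep_subst:
  assumes X: "team_on A (set xs) X" and dys: "distinct ys" and disj: "set ys \<inter> set xs = {}"
    and d: "distr_on A (length ys) d"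
  shows "sat A I D (team_subst X ys d) (Indep [] xs ys)"
proof -
  { fix f
    let ?g = "\<lambda>p. (fst p)(ys[\<mapsto>]snd p)"
    let ?P = "{s. \<forall>v\<in>set xs. s v = Some (f v)} \<inter> set_pmf X"
    let ?Q = "{as. as = map f ys} \<inter> set_pmf d"
    have supp: "\<And>s as. (s, as) \<in> set_pmf (pair_pmf X d) \<Longrightarrow> s \<in> set_pmf X \<and> as \<in> set_pmf d \<and> length as = length ys"
      using d by (auto simp: distr_on_def)
    have nx: "\<And>v s as. v \<in> set xs \<Longrightarrow> (s(ys[\<mapsto>]as)) v = s v" using disj by (metis disjoint_iff map_upds_apply_nontin)
    have c: "countable ?P" "countable ?Q" "countable (set_pmf X)" "countable (set_pmf d)"
      by (auto intro: countable_subset[OF _ countable_set_pmf])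
    have w1: "wt (team_subst X ys d) (xs @ ys) f = measure_pmf.prob (pair_pmf X d) (?P \<times> ?Q)"
      unfolding team_subst_pair wt_map
      apply (rule prob_cong_supp)
      subgoal for p using supp[of "fst p" "snd p"] nx upd_ys[OF dys, of "snd p" "fst p" f]
        by (cases p) (auto simp: nx ball_Un)
      done
    have w2: "wt (team_subst X ys d) xs f = measure_pmf.prob (pair_pmf X d) (?P \<times> set_pmf d)"
      unfolding team_subst_pair wt_map
      apply (rule prob_cong_supp)
      subgoal for p using supp[of "fst p" "snd p"] nx by (cases p) (auto simp: nx)
      done
    have w3: "wt (team_subst X ys d) ys f = measure_pmf.prob (pair_pmf X d) (set_pmf X \<times> ?Q)"
      unfolding team_subst_pair wt_map
      apply (rule prob_cong_supp)
      subgoal for p using supp[of "fst p" "snd p"] upd_ys[OF dys, of "snd p" "fst p" f]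
        by (cases p) auto
      done
    have w4: "wt (team_subst X ys d) [] f = 1" by (simp add: wt_def)
    have "wt (team_subst X ys d) xs f * wt (team_subst X ys d) ys f =
          wt (team_subst X ys d) (xs @ ys) f * wt (team_subst X ys d) [] f"
      unfolding w1 w2 w3 w4 using c
      by (simp add: measure_pmf_prob_product prob_set_pmf)
  }
  then show ?thesis by simp
qed


lemma indep_imp:
  assumes X: "team_on A (set xs) X" and A: "A \<noteq> {}" and dys: "distinct ys"
    and disj: "set ys \<inter> set xs = {}"
    and K: "\<forall>s\<in>set_pmf X. distr_on A (length ys) (K s)"
    and S: "sat A I D (bind_pmf X (\<lambda>s. map_pmf (\<lambda>as. s(ys[\<mapsto>]as)) (K s))) (Indep [] xs ys)"
  shows "bind_pmf X (\<lambda>s. map_pmf (\<lambda>as. s(ys[\<mapsto>]as)) (K s)) = team_subst X ys (bind_pmf X K)"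
proof -
  define J where "J = bind_pmf X (\<lambda>s. map_pmf (Pair s) (K s))"
  define d where "d = bind_pmf X K"
  let ?g = "\<lambda>p. (fst p)(ys[\<mapsto>]snd p)"
  let ?T = "bind_pmf X (\<lambda>s. map_pmf (\<lambda>as. s(ys[\<mapsto>]as)) (K s))"
  have T: "?T = map_pmf ?g J"
    by (simp add: J_def map_bind_pmf map_pmf_comp)
  have fstJ: "map_pmf fst J = X" by (simp add: J_def map_bind_pmf map_pmf_comp bind_return_pmf')
  have sndJ: "map_pmf snd J = d" by (simp add: J_def d_def map_bind_pmf map_pmf_comp bind_return_pmf')
  have suppJ: "\<And>s as. (s, as) \<in> set_pmf J \<Longrightarrow> s \<in> set_pmf X \<and> as \<in> set_pmf (K s)"
    by (auto simp: J_def)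
  have nx: "\<And>v s as. v \<in> set xs \<Longrightarrow> (s(ys[\<mapsto>]as)) v = s v" using disj by (metis disjoint_iff map_upds_apply_nontin)
  obtain a0 where a0: "a0 \<in> A" using A by auto
  have "J = pair_pmf X d"
  proof (rule pmf_eqI)
    fix p show "pmf J p = pmf (pair_pmf X d) p"
    proof (cases p)
      case (Pair s as)
      show ?thesis
      proof (cases "s \<in> set_pmf X \<and> as \<in> set_pmf d")
        case False
        then have "p \<notin> set_pmf J" using suppJ Pair by (auto simp: d_def)
        then show ?thesis using False Pair by (auto simp: pmf_pair set_pmf_iff)
      next
        case True
        then have sX: "s \<in> set_pmf X" and asd: "as \<in> set_pmf d" by auto
        obtain s' where s': "s' \<in> set_pmf X" "as \<in> set_pmf (K s')" using asd by (auto simp: d_def)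
        have las: "length as = length ys" and sA: "set as \<subseteq> A" using K s' by (auto simp: distr_on_def)
        have ds: "dom s = set xs" and rs: "ran s \<subseteq> A" using X sX by (auto simp: team_on_def)
        define m where "m = s(ys[\<mapsto>]as)"
        define f where "f v = (case m v of Some b \<Rightarrow> b | None \<Rightarrow> a0)" for v
        have fA: "f v \<in> A" for v
        proof (cases "m v")
          case None then show ?thesis using a0 by (simp add: f_def)
        next
          case (Some b)
          then have "b \<in> ran s \<union> set as" using upd_ran unfolding m_def by metis
          then show ?thesis using Some rs sA by (auto simp: f_def)
        qed
        have sx: "\<forall>v\<in>set xs. s v = Some (f v)"
        proof
          fix v assume v: "v \<in> set xs"
          then obtain b where "s v = Some b" using ds by auto
          moreover have "m v = s v" using nx[OF v] by (simp add: m_def)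
          ultimately show "s v = Some (f v)" by (simp add: f_def)
        qed
        have mys: "\<forall>v\<in>set ys. m v = Some (f v)"
        proof
          fix v assume v: "v \<in> set ys"
          then have "v \<in> dom m" using las by (simp add: m_def)
          then show "m v = Some (f v)" by (auto simp: f_def)
        qed
        have asf: "as = map f ys" using upd_ys[OF dys las, of s f] mys by (simp add: m_def)
        have agree: "\<And>s'. s' \<in> set_pmf X \<Longrightarrow> (\<forall>v\<in>set xs. s' v = Some (f v)) \<longleftrightarrow> s' = s"
        proof -
          fix s' assume s': "s' \<in> set_pmf X"
          then have ds': "dom s' = set xs" using X by (auto simp: team_on_def)
          show "(\<forall>v\<in>set xs. s' v = Some (f v)) \<longleftrightarrow> s' = s"
          proof
            assume h: "\<forall>v\<in>set xs. s' v = Some (f v)"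
            show "s' = s"
            proof
              fix v show "s' v = s v"
              proof (cases "v \<in> set xs")
                case True then show ?thesis using h sx by auto
              next
                case False
                then have "v \<notin> dom s" "v \<notin> dom s'" using ds ds' by auto
                then show ?thesis by (simp add: domIff)
              qed
            qed
          qed (use sx in auto)
        qed
        have lenJ: "\<And>s' as'. (s', as') \<in> set_pmf J \<Longrightarrow> length as' = length ys"
          using suppJ K by (auto simp: distr_on_def)
        have w1: "wt ?T (xs @ ys) f = pmf J (s, as)"
          unfolding T wt_map measure_pmf_single[symmetric]
          apply (rule prob_cong_supp)
          subgoal for p' using suppJ[of "fst p'" "snd p'"] lenJ[of "fst p'" "snd p'"]
              agree[of "fst p'"] upd_ys[OF dys, of "snd p'" "fst p'" f] asf
            by (cases p') (auto simp: nx ball_Un)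
          done
        have w2: "wt ?T xs f = pmf X s"
        proof -
          have "wt ?T xs f = measure_pmf.prob J (fst -` {s})"
            unfolding T wt_map
            apply (rule prob_cong_supp)
            subgoal for p' using suppJ[of "fst p'" "snd p'"] agree[of "fst p'"]
              by (cases p') (auto simp: nx)
            done
          also have "\<dots> = pmf X s" by (metis fstJ measure_map_pmf measure_pmf_single)
          finally show ?thesis .
        qed
        have w3: "wt ?T ys f = pmf d as"
        proof -
          have "wt ?T ys f = measure_pmf.prob J (snd -` {as})"
            unfolding T wt_map
            apply (rule prob_cong_supp)
            subgoal for p' using lenJ[of "fst p'" "snd p'"] upd_ys[OF dys, of "snd p'" "fst p'" f] asf
              by (cases p') auto
            done
          also have "\<dots> = pmf d as" by (metis sndJ measure_map_pmf measure_pmf_single)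
          finally show ?thesis .
        qed
        have w4: "wt ?T [] f = 1" by (simp add: wt_def)
        have "wt ?T xs f * wt ?T ys f = wt ?T (xs @ ys) f * wt ?T [] f"
          using S fA by simp
        then show ?thesis unfolding w1 w2 w3 w4 Pair by (simp add: pmf_pair)
      qed
    qed
  qed
  then show ?thesis unfolding T team_subst_pair d_def by simp
qed


lemma main_ex:
  assumes A: "A \<noteq> {}" and dys: "distinct ys" and disj: "set ys \<inter> set xs = {}"
    and X: "team_on A (set xs) X"
  shows "sat A I (set xs) X (Exs ys (And (Indep [] xs ys) \<theta>)) \<longleftrightarrow>
    (\<exists>d. distr_on A (length ys) d \<and> sat A I (set xs \<union> set ys) (team_subst X ys d) \<theta>)"
proof -
  have disj': "set ys \<inter> set xs = {}" using disj by auto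
  note ch = chain[OF A dys disj' X, of I "And (Indep [] xs ys) \<theta>"]
  show ?thesis
  proof
    assume "sat A I (set xs) X (Exs ys (And (Indep [] xs ys) \<theta>))"
    then obtain K where K: "\<forall>s\<in>set_pmf X. distr_on A (length ys) (K s)"
      and S: "sat A I (set xs \<union> set ys) (bind_pmf X (\<lambda>s. map_pmf (\<lambda>as. s(ys[\<mapsto>]as)) (K s))) (And (Indep [] xs ys) \<theta>)"
      using ch by blast
    have eq: "bind_pmf X (\<lambda>s. map_pmf (\<lambda>as. s(ys[\<mapsto>]as)) (K s)) = team_subst X ys (bind_pmf X K)"
      using S by (intro indep_imp[OF X A dys disj K]) simp
    have "distr_on A (length ys) (bind_pmf X K)" using K by (auto simp: distr_on_def)
    then show "\<exists>d. distr_on A (length ys) d \<and> sat A I (set xs \<union> set ys) (team_subst X ys d) \<theta>"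
      using S eq by (metis sat.simps(7))
  next
    assume "\<exists>d. distr_on A (length ys) d \<and> sat A I (set xs \<union> set ys) (team_subst X ys d) \<theta>"
    then obtain d where d: "distr_on A (length ys) d" and S: "sat A I (set xs \<union> set ys) (team_subst X ys d) \<theta>"
      by blast
    have "sat A I (set xs \<union> set ys) (team_subst X ys d) (Indep [] xs ys)"
      by (rule indep_subst[OF X dys disj d])
    then have "sat A I (set xs \<union> set ys) (bind_pmf X (\<lambda>s. map_pmf (\<lambda>as. s(ys[\<mapsto>]as)) ((\<lambda>_. d) s))) (And (Indep [] xs ys) \<theta>)"
      using S by (simp add: team_subst_def)
    then show "sat A I (set xs) X (Exs ys (And (Indep [] xs ys) \<theta>))"
      unfolding ch using d by (intro exI[of _ "\<lambda>_. d"]) simp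
  qed
qed

lemma forall_stars:
  "sat A I D X (ForallStars ys \<theta>) \<longleftrightarrow> \<not> sat A I D X (Exs ys (Tilde \<theta>))"
proof (induction ys arbitrary: D X)
  case Nil then show ?case by (simp add: ForallStars_def Exs_def)
next
  case (Cons y ys)
  have e1: "ForallStars (y#ys) \<theta> = Tilde (Ex y (Tilde (ForallStars ys \<theta>)))"
    by (simp add: ForallStars_def ForallStar_def)
  have e2: "Exs (y#ys) (Tilde \<theta>) = Ex y (Exs ys (Tilde \<theta>))" by (simp add: Exs_def)
  show ?case unfolding e1 e2 sat.simps using Cons.IH by blast
qed

lemma ex_swap:
  assumes A: "A \<noteq> {}" and dys: "distinct ys" and disj: "set ys \<inter> D = {}"
    and X: "team_on A D X"
  shows "sat A I D X (Exs ys (Tilde (ImpStar a b))) \<longleftrightarrow> sat A I D X (Exs ys (And a (Tilde b)))"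
  unfolding chain[OF A dys disj X] by (simp add: ImpStar_def)

theorem mainTheorem5:
  fixes A :: "'a set" and I :: "'r \<Rightarrow> 'a list \<Rightarrow> bool"
    and xs ys :: "'v list" and \<psi> :: "('v, 'r) fml" and X :: "('v, 'a) team"
  assumes "finite A" and "A \<noteq> {}"
    and "distinct ys" and "set ys \<inter> set xs = {}"
    and "fv \<psi> \<subseteq> set xs \<union> set ys"
    and "team_on A (set xs) X"
  shows "(sat A I (set xs) X (phi_ex xs ys \<psi>) \<longleftrightarrow>
            (\<exists>d. distr_on A (length ys) d \<and> sat A I (set xs \<union> set ys) (team_subst X ys d) \<psi>))
       \<and> (sat A I (set xs) X (phi_all xs ys \<psi>) \<longleftrightarrow>
            (\<forall>d. distr_on A (length ys) d \<longrightarrow> sat A I (set xs \<union> set ys) (team_subst X ys d) \<psi>))"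
proof
  show "sat A I (set xs) X (phi_ex xs ys \<psi>) \<longleftrightarrow>
            (\<exists>d. distr_on A (length ys) d \<and> sat A I (set xs \<union> set ys) (team_subst X ys d) \<psi>)"
    unfolding phi_ex_def using main_ex[OF assms(2,3,4,6)] by blast
  have "sat A I (set xs) X (phi_all xs ys \<psi>) \<longleftrightarrow>
      \<not> sat A I (set xs) X (Exs ys (And (Indep [] xs ys) (Tilde \<psi>)))"
    unfolding phi_all_def forall_stars ex_swap[OF assms(2,3,4,6)] ..
  also have "\<dots> \<longleftrightarrow> (\<forall>d. distr_on A (length ys) d \<longrightarrow> sat A I (set xs \<union> set ys) (team_subst X ys d) \<psi>)"
    using main_ex[OF assms(2,3,4,6), of I "Tilde \<psi>"] by auto
  finally show "sat A I (set xs) X (phi_all xs ys \<psi>) \<longleftrightarrow>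
            (\<forall>d. distr_on A (length ys) d \<longrightarrow> sat A I (set xs \<union> set ys) (team_subst X ys d) \<psi>)" .
qed

end
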